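(* Let $-1<q<1$ and let $X(t)$ be the centered $q$-Poisson process. Then for every $m\ge0$ and $t>0$ the full stochastic measure $\psi_m(t)=\lim_{\delta(\mathcal I)\to0}\psi_m(t;\mathcal I)$ exists as a limit in the $L^2$-norm with respect to $\mathbb E$, and $\psi_m(t)=C_{q,m}(X(t),t)$.
   Context: $q$-Fock space over $H=L^2(\mathbb R_+,dx)$: the algebraic Fock space $\bigoplus_{k\ge0}H^{\otimes k}$ (vacuum $\Omega$) with inner product $\langle f_1\otimes\cdots\otimes f_k,g_1\otimes\cdots\otimes g_n\rangle_q=\delta_{kn}\sum_{\sigma\in\mathrm{Sym}(n)}q^{i(\sigma)}\prod_j\langle f_j,g_{\sigma(j)}\rangle$ ($i(\sigma)$ = number of inversions), completed to $\mathcal F_q(H)$. For $f\in L^2\cap L^\infty(\mathbb R_+)$: $a^*(f)\Omega=f$, $a^*(f)(g_1\otimes\cdots\otimes g_n)=f\otimes g_1\otimes\cdots\otimes g_n$; $a(f)\Omega=0$, $a(f)(g_1\otimes\cdots\otimes g_n)=\sum_{k=1}^nq^{k-1}\langle f,g_k\rangle g_1\otimes\cdots\widehat{g_k}\cdots\otimes g_n$; $p(f)\Omega=0$, $p(f)(g_1\otimes\cdots\otimes g_n)=\sum_{k=1}^nq^{k-1}(fg_k)\otimes g_1\otimes\cdots\widehat{g_k}\cdots\otimes g_n$ (hat = omitted). The centered $q$-Poisson process is $X(t)=a^*(\mathbf 1_{[0,t)})+a(\mathbf 1_{[0,t)})+p(\mathbf 1_{[0,t)})$. $\mathbb E[A]=\langle\Omega,A\Omega\rangle$,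 $\|A\|_2=\mathbb E[A^*A]^{1/2}$. For a subdivision $\mathcal I=\{[a_i,a_{i+1})\}_{i=1}^N$ of $[0,t)$, $\delta(\mathcal I)=\max_i(a_{i+1}-a_i)$, $X_i=X(a_{i+1})-X(a_i)$, and $\psi_m(t;\mathcal I)=\sum X_{u(1)}\cdots X_{u(m)}$ over all $m$-tuples of pairwise distinct indices $u(j)\in\{1,\dots,N\}$. Let $[0]_q=0$, $[n]_q=1+q+\dots+q^{n-1}$. The polynomials $C_{q,m}(x,t)$ (scaled centered continuous big $q$-Hermite polynomials) are defined by $C_{q,0}=1$, $C_{q,-1}=0$ and $xC_{q,m}(x,t)=C_{q,m+1}(x,t)+[m]_qC_{q,m}(x,t)+t[m]_qC_{q,m-1}(x,t)$. *)

theory Defs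
  imports "HOL-Analysis.Analysis" "HOL-Combinatorics.Permutations"
          "HOL-Computational_Algebra.Polynomial"
begin

text \<open>Vectors of the algebraic q-Fock space over L2(R+) are represented as finite
  formal linear combinations of simple tensors f1 (x) ... (x) fk: a list of pairs
  (coefficient, [f1,...,fk]); the empty tensor list is the vacuum.\<close>

type_synonym fn = "real \<Rightarrow> real"
type_synonym fvec = "(real \<times> fn list) list"

definition Omega :: fvec where "Omega = [(1, [])]"

definition vscale :: "real \<Rightarrow> fvec \<Rightarrow> fvec" where
  "vscale c v = map (\<lambda>(d, gs). (c * d, gs)) v"

definition vadd :: "fvec \<Rightarrow> fvec \<Rightarrow> fvec" where
  "vadd v w = v @ w"

definition vsub :: "fvec \<Rightarrow> fvec \<Rightarrow> fvec" where
  "vsub v w = v @ vscale (-1) w"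

definition l2inner :: "fn \<Rightarrow> fn \<Rightarrow> real" where
  "l2inner f g = (LINT x:{0..}|lborel. f x * g x)"

definition inversions_of :: "nat \<Rightarrow> (nat \<Rightarrow> nat) \<Rightarrow> nat" where
  "inversions_of n \<sigma> = card {(i, j). i < j \<and> j < n \<and> \<sigma> j < \<sigma> i}"

definition qip :: "real \<Rightarrow> fn list \<Rightarrow> fn list \<Rightarrow> real" where
  "qip q fs gs = (if length fs = length gs then
     (\<Sum>\<sigma>\<in>{\<sigma>. \<sigma> permutes {..<length gs}}.
        q ^ inversions_of (length gs) \<sigma> * (\<Prod>j<length gs. l2inner (fs ! j) (gs ! (\<sigma> j))))
   else 0)"

definition vinner :: "real \<Rightarrow> fvec \<Rightarrow> fvec \<Rightarrow> real" where
  "vinner q v w = sum_list (map (\<lambda>(c, gs). sum_list (map (\<lambda>(d, hs). c * d * qip q gs hs) w)) v)"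

definition vnorm :: "real \<Rightarrow> fvec \<Rightarrow> real" where
  "vnorm q v = sqrt (vinner q v v)"

definition op_lin :: "(fn list \<Rightarrow> fvec) \<Rightarrow> fvec \<Rightarrow> fvec" where
  "op_lin T v = concat (map (\<lambda>(c, gs). vscale c (T gs)) v)"

definition acre :: "fn \<Rightarrow> fn list \<Rightarrow> fvec" where
  "acre f gs = [(1, f # gs)]"

definition aann :: "real \<Rightarrow> fn \<Rightarrow> fn list \<Rightarrow> fvec" where
  "aann q f gs = map (\<lambda>k. (q ^ k * l2inner f (gs ! k), take k gs @ drop (Suc k) gs))
                     [0..<length gs]"

definition pop :: "real \<Rightarrow> fn \<Rightarrow> fn list \<Rightarrow> fvec" where
  "pop q f gs = map (\<lambda>k. (q ^ k, (\<lambda>x. f x * (gs ! k) x) # (take k gs @ drop (Suc k) gs)))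
                    [0..<length gs]"

text \<open>Centered q-Poisson process X(t) = a*(1_[0,t)) + a(1_[0,t)) + p(1_[0,t)).\<close>
definition Xop :: "real \<Rightarrow> real \<Rightarrow> fvec \<Rightarrow> fvec" where
  "Xop q t = op_lin (\<lambda>gs. acre (indicator {0..<t}) gs @ aann q (indicator {0..<t}) gs
                          @ pop q (indicator {0..<t}) gs)"

definition is_subdiv :: "real \<Rightarrow> real list \<Rightarrow> bool" where
  "is_subdiv t as \<longleftrightarrow> 2 \<le> length as \<and> sorted_wrt (<) as \<and> hd as = 0 \<and> last as = t"

definition mesh :: "real list \<Rightarrow> real" where
  "mesh as = Max (set (map (\<lambda>(a, b). b - a) (zip as (tl as))))"

text \<open>psi_m(t; I) applied to the vacuum.\<close>
definition psi_vec :: "real \<Rightarrow> nat \<Rightarrow> real list \<Rightarrow> fvec" where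
  "psi_vec q m as =
     (let N = length as - 1;
          Xi = (\<lambda>i v. vsub (Xop q (as ! Suc i) v) (Xop q (as ! i) v))
      in concat (map (\<lambda>u. foldr Xi u Omega) (filter distinct (List.n_lists m [0..<N]))))"

definition qnum :: "real \<Rightarrow> nat \<Rightarrow> real" where
  "qnum q n = (\<Sum>i<n. q ^ i)"

text \<open>C_{q,m}(x,t) as a polynomial in x; C_{-1} = 0, C_0 = 1,
  C_{m+1} = x C_m - [m]_q C_m - t [m]_q C_{m-1}.\<close>
fun Cq :: "real \<Rightarrow> real \<Rightarrow> nat \<Rightarrow> real poly" where
  "Cq q t 0 = 1"
| "Cq q t (Suc 0) = [:0, 1:] * 1 - smult (qnum q 0) 1 - smult (t * qnum q 0) 0"
| "Cq q t (Suc (Suc m)) = [:0, 1:] * Cq q t (Suc m) - smult (qnum q (Suc m)) (Cq q t (Suc m))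
       - smult (t * qnum q (Suc m)) (Cq q t m)"

definition opoly :: "real poly \<Rightarrow> (fvec \<Rightarrow> fvec) \<Rightarrow> fvec \<Rightarrow> fvec" where
  "opoly p A v = concat (map (\<lambda>i. vscale (coeff p i) ((A ^^ i) v)) [0..<Suc (degree p)])"

end

theory Submission
  imports Defs
begin

locale part =
  fixes as :: "real list"
  assumes srt: "sorted_wrt (<) as" and hd0: "as ! 0 = 0" and len2: "2 \<le> length as"
begin

abbreviation N where "N \<equiv> length as - 1"
abbreviation I where "I i \<equiv> {as ! i..<as ! Suc i}"
definition w where "w i = as ! Suc i - as ! i"

definition stepS :: "(real \<Rightarrow> real) \<Rightarrow> bool" where
  "stepS f \<longleftrightarrow> (\<forall>x. f x = (\<Sum>i<N. f (as ! i) * indicator (I i) x))"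

lemma a_less: "i < j \<Longrightarrow> j \<le> N \<Longrightarrow> as ! i < as ! j"
  using sorted_wrt_nth_less[OF srt, of i j] len2 by auto

lemma a_le: "i \<le> j \<Longrightarrow> j \<le> N \<Longrightarrow> as ! i \<le> as ! j"
  using a_less[of i j] by (cases "i = j") auto

lemma a_step: "i < N \<Longrightarrow> as ! i \<le> as ! Suc i"
  using a_le[of i "Suc i"] by auto

lemma a_nonneg: "i \<le> N \<Longrightarrow> 0 \<le> as ! i"
  using a_le[of 0 i] hd0 by auto

lemma w_nonneg: "i < N \<Longrightarrow> 0 \<le> w i"
  using a_less[of i "Suc i"] by (auto simp: w_def)

lemma ind_disj:
  assumes "i < N" "j < N" "i \<noteq> j"
  shows "indicator (I i) x * indicator (I j) x = (0::real)"
proof (cases "i < j")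
  case True
  then have "as ! Suc i \<le> as ! j" using a_le[of "Suc i" j] assms by auto
  then show ?thesis by (auto simp: indicator_def)
next
  case False
  then have "as ! Suc j \<le> as ! i" using a_le[of "Suc j" i] assms by auto
  then show ?thesis by (auto simp: indicator_def)
qed

lemma ind_sq: "indicator (I i) x * indicator (I i) x = (indicator (I i) x :: real)"
  by (auto simp: indicator_def)

lemma sum_ind: "K \<le> N \<Longrightarrow> (\<Sum>i<K. indicator (I i) x) = (indicator {0..<as ! K} x :: real)"
proof (induction K)
  case 0
  then show ?case using hd0 by (auto simp: indicator_def)
next
  case (Suc K)
  have "0 \<le> as ! K" "as ! K \<le> as ! Suc K" using a_nonneg[of K] a_le[of K "Suc K"] Suc.prems by auto
  then show ?case using Suc by (auto simp: indicator_def)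
qed

lemma ind_at: "K \<le> N \<Longrightarrow> i < N \<Longrightarrow> indicator {0..<as ! K} (as ! i) = (if i < K then 1 else (0::real))"
  using a_nonneg[of i] a_less[of i K] a_le[of K i] by (auto simp: indicator_def)

lemma stepS_ind: assumes "K \<le> N" shows "stepS (indicator {0..<as ! K})"
  unfolding stepS_def
proof
  fix x
  have "(\<Sum>i<N. indicator {0..<as ! K} (as ! i) * indicator (I i) x)
      = (\<Sum>i<N. if i < K then indicator (I i) x else (0::real))"
    using ind_at[OF assms] by (intro sum.cong) auto
  also have "\<dots> = (\<Sum>i<K. indicator (I i) x)"
    using assms by (intro sum.mono_neutral_cong_right) auto
  finally show "(indicator {0..<as ! K} x::real) = (\<Sum>i<N. indicator {0..<as ! K} (as ! i) * indicator (I i) x)"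
    using sum_ind[OF assms, of x] by linarith
qed

lemma prod_ind: "i < N \<Longrightarrow> (\<Sum>j<N. c j * indicator (I i) x * indicator (I j) x) = c i * (indicator (I i) x :: real)"
proof -
  assume i: "i < N"
  have "(\<Sum>j<N. c j * indicator (I i) x * indicator (I j) x) = (\<Sum>j<N. if j = i then c i * indicator (I i) x else 0)"
    using ind_disj[of i _ x] ind_sq[of i x] i by (intro sum.cong) (auto simp: mult.assoc)
  then show ?thesis using i by simp
qed

lemma stepS_mult_eq:
  assumes "stepS f" "stepS g"
  shows "f x * g x = (\<Sum>i<N. f (as ! i) * g (as ! i) * indicator (I i) x)"
proof -
  have "f x * g x = (\<Sum>i<N. f (as ! i) * indicator (I i) x) * (\<Sum>j<N. g (as ! j) * indicator (I j) x)"
    using assms unfolding stepS_def by metis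
  also have "\<dots> = (\<Sum>i<N. f (as ! i) * (\<Sum>j<N. g (as ! j) * indicator (I i) x * indicator (I j) x))"
    unfolding sum_product by (intro sum.cong refl) (simp add: sum_distrib_left mult_ac)
  also have "\<dots> = (\<Sum>i<N. f (as ! i) * (g (as ! i) * indicator (I i) x))"
    by (intro sum.cong refl, subst prod_ind) auto
  finally show ?thesis by (simp add: mult_ac)
qed

lemma stepS_mult: "stepS f \<Longrightarrow> stepS g \<Longrightarrow> stepS (\<lambda>x. f x * g x)"
  unfolding stepS_def[of "\<lambda>x. f x * g x"] using stepS_mult_eq by blast

lemma l2inner_step:
  assumes "stepS f" "stepS g"
  shows "l2inner f g = (\<Sum>i<N. f (as ! i) * g (as ! i) * w i)"
proof -
  have eq: "indicator {0..} x *\<^sub>R (f x * g x) = (\<Sum>i<N. f (as ! i) * g (as ! i) * indicator (I i) x)" for x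
  proof -
    have h: "indicator {0..} x * (c * indicator (I i) x) = (c * indicator (I i) x :: real)" if "i < N" for i c
      using a_nonneg[of i] that by (auto simp: indicator_def)
    show ?thesis unfolding stepS_mult_eq[OF assms, of x] real_scaleR_def sum_distrib_left
      using h by (intro sum.cong refl) auto
  qed
  have "l2inner f g = integral\<^sup>L lborel (\<lambda>x. \<Sum>i<N. f (as ! i) * g (as ! i) * indicator (I i) x)"
    unfolding l2inner_def set_lebesgue_integral_def eq ..
  also have "\<dots> = (\<Sum>i<N. integral\<^sup>L lborel (\<lambda>x. f (as ! i) * g (as ! i) * indicator (I i) x))"
    by (subst Bochner_Integration.integral_sum) (auto intro!: integrable_mult_right simp: integrable_indicator_iff a_step)
  also have "\<dots> = (\<Sum>i<N. f (as ! i) * g (as ! i) * w i)"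
  proof (intro sum.cong refl)
    fix i assume "i \<in> {..<N}"
    then have "as ! i \<le> as ! Suc i" using a_le[of i "Suc i"] by auto
    then show "integral\<^sup>L lborel (\<lambda>x. f (as ! i) * g (as ! i) * indicator (I i) x) = f (as ! i) * g (as ! i) * w i"
      by (simp add: integral_indicator w_def)
  qed
  finally show ?thesis .
qed

definition P :: "fn list \<Rightarrow> nat \<Rightarrow> (nat \<Rightarrow> nat) \<Rightarrow> real" where
  "P gs k u = (if length gs = k then (\<Prod>j<k. (gs ! j) (as ! (u j))) else 0)"

definition Ph :: "fvec \<Rightarrow> nat \<Rightarrow> (nat \<Rightarrow> nat) \<Rightarrow> real" where
  "Ph v k u = sum_list (map (\<lambda>(c, gs). c * P gs k u) v)"

definition ins :: "nat \<Rightarrow> nat \<Rightarrow> (nat \<Rightarrow> nat) \<Rightarrow> nat \<Rightarrow> nat" where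
  "ins p i u j = (if j < p then u j else if j = p then i else u (j - 1))"

definition Lop :: "real \<Rightarrow> (real \<Rightarrow> real) \<Rightarrow> (nat \<Rightarrow> (nat \<Rightarrow> nat) \<Rightarrow> real) \<Rightarrow> nat \<Rightarrow> (nat \<Rightarrow> nat) \<Rightarrow> real" where
  "Lop q f F k u = (if k = 0 then 0 else f (as ! (u 0)) * F (k - 1) (\<lambda>j. u (Suc j)))
     + (\<Sum>p<Suc k. q ^ p * (\<Sum>i<N. f (as ! i) * w i * F (Suc k) (ins p i u)))
     + (\<Sum>p<k. q ^ p * f (as ! (u 0)) * F k (ins p (u 0) (\<lambda>j. u (Suc j))))"

definition goodv :: "fvec \<Rightarrow> bool" where
  "goodv v \<longleftrightarrow> (\<forall>cg\<in>set v. \<forall>g\<in>set (snd cg). stepS g)"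

lemma Ph_append[simp]: "Ph (v @ v') k u = Ph v k u + Ph v' k u"
  by (simp add: Ph_def)

lemma Ph_vscale[simp]: "Ph (vscale c v) k u = c * Ph v k u"
  by (induction v) (auto simp: Ph_def vscale_def algebra_simps)

lemma Ph_vsub[simp]: "Ph (vsub v v') k u = Ph v k u - Ph v' k u"
  by (simp add: vsub_def)

lemma Ph_concat: "Ph (concat vs) k u = sum_list (map (\<lambda>v. Ph v k u) vs)"
  by (induction vs) (auto simp: Ph_def)

lemma Ph_op_lin: "Ph (op_lin T v) k u = sum_list (map (\<lambda>(c, gs). c * Ph (T gs) k u) v)"
  unfolding op_lin_def Ph_concat by (induction v) auto

lemma Ph_Omega: "Ph Omega k u = (if k = 0 then 1 else 0)"
  by (simp add: Ph_def Omega_def P_def)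

lemma Ph_nil[simp]: "Ph [] k u = 0"
  by (simp add: Ph_def)

lemma Ph_Cons: "Ph ((c, gs) # v) k u = c * P gs k u + Ph v k u"
  by (simp add: Ph_def)

lemma prod_split:
  fixes F :: "nat \<Rightarrow> real"
  assumes "p \<le> k"
  shows "(\<Prod>j<Suc k. F j) = F p * (\<Prod>j<k. F (if j < p then j else Suc j))"
proof -
  have "(\<Prod>j<Suc k. F j) = F p * (\<Prod>j\<in>{..<Suc k} - {p}. F j)"
    using assms by (subst prod.remove[of _ p]) auto
  also have "(\<Prod>j\<in>{..<Suc k} - {p}. F j) = (\<Prod>j<k. F (if j < p then j else Suc j))"
    by (rule prod.reindex_bij_witness[of _ "\<lambda>j. if j < p then j else Suc j" "\<lambda>j. if j < p then j else j - 1"])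
       (use assms in \<open>auto split: if_splits\<close>)
  finally show ?thesis .
qed

lemma del_nth:
  assumes "p < length gs" "j < length gs - 1"
  shows "(take p gs @ drop (Suc p) gs) ! j = gs ! (if j < p then j else Suc j)"
  using assms by (auto simp: nth_append min_def)

lemma P_split:
  assumes "length gs = Suc k" "p \<le> k"
  shows "P gs (Suc k) (ins p i u) = (gs ! p) (as ! i) * P (take p gs @ drop (Suc p) gs) k u"
proof -
  have "P gs (Suc k) (ins p i u) = (\<Prod>j<Suc k. (gs ! j) (as ! (ins p i u j)))"
    using assms by (simp add: P_def)
  also have "\<dots> = (gs ! p) (as ! i) * (\<Prod>j<k. (gs ! (if j < p then j else Suc j)) (as ! u j))"
    by (subst prod_split[OF assms(2)]) (auto simp: ins_def intro!: prod.cong)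
  also have "(\<Prod>j<k. (gs ! (if j < p then j else Suc j)) (as ! u j)) = P (take p gs @ drop (Suc p) gs) k u"
    using assms by (auto simp: P_def del_nth intro!: prod.cong)
  finally show ?thesis .
qed

lemma P_cons: "P (f # gs) k u = (if k = 0 then 0 else f (as ! (u 0)) * P gs (k - 1) (\<lambda>j. u (Suc j)))"
  by (cases k) (simp_all add: P_def prod.lessThan_Suc_shift del: prod.lessThan_Suc)

lemma sum_list_upt_eq: "sum_list (map f [0..<n]) = (\<Sum>p<n. f p)"
  by (simp add: sum_set_upt_conv_sum_list_nat[symmetric] atLeast0LessThan)

lemma Ph_acre: "Ph (acre f gs) k u = (if k = 0 then 0 else f (as ! (u 0)) * P gs (k - 1) (\<lambda>j. u (Suc j)))"
  by (simp add: acre_def Ph_def P_cons)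

lemma Ph_aann:
  assumes "stepS f" "\<forall>g\<in>set gs. stepS g"
  shows "Ph (aann q f gs) k u = (\<Sum>p<Suc k. q ^ p * (\<Sum>i<N. f (as ! i) * w i * P gs (Suc k) (ins p i u)))"
proof -
  have "Ph (aann q f gs) k u = (\<Sum>p<length gs. q ^ p * l2inner f (gs ! p) * P (take p gs @ drop (Suc p) gs) k u)"
    by (simp add: aann_def Ph_def comp_def sum_list_upt_eq)
  also have "\<dots> = (\<Sum>p<Suc k. q ^ p * (\<Sum>i<N. f (as ! i) * w i * P gs (Suc k) (ins p i u)))"
  proof (cases "length gs = Suc k")
    case True
    show ?thesis unfolding True
    proof (intro sum.cong refl)
      fix p assume p: "p \<in> {..<Suc k}"
      have st: "stepS (gs ! p)" using assms(2) p True by auto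
      show "q ^ p * l2inner f (gs ! p) * P (take p gs @ drop (Suc p) gs) k u =
            q ^ p * (\<Sum>i<N. f (as ! i) * w i * P gs (Suc k) (ins p i u))"
        using p True
        by (simp add: l2inner_step[OF assms(1) st] P_split sum_distrib_left sum_distrib_right mult_ac)
    qed
  next
    case False
    have "P (take p gs @ drop (Suc p) gs) k u = 0" if "p < length gs" for p
      using False that by (auto simp: P_def)
    moreover have "P gs (Suc k) v = 0" for v using False by (simp add: P_def)
    ultimately show ?thesis by simp
  qed
  finally show ?thesis .
qed

lemma Ph_pop:
  shows "Ph (pop q f gs) k u = (\<Sum>p<k. q ^ p * f (as ! (u 0)) * P gs k (ins p (u 0) (\<lambda>j. u (Suc j))))"
proof -
  have "Ph (pop q f gs) k u = (\<Sum>p<length gs. q ^ p * P ((\<lambda>x. f x * (gs ! p) x) # (take p gs @ drop (Suc p) gs)) k u)"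
    by (simp add: pop_def Ph_def comp_def sum_list_upt_eq)
  also have "\<dots> = (\<Sum>p<k. q ^ p * f (as ! (u 0)) * P gs k (ins p (u 0) (\<lambda>j. u (Suc j))))"
  proof (cases "length gs = k")
    case True
    show ?thesis unfolding True
    proof (intro sum.cong refl)
      fix p assume p: "p \<in> {..<k}"
      then obtain k' where k': "k = Suc k'" by (cases k) auto
      have "P gs k (ins p (u 0) (\<lambda>j. u (Suc j))) = (gs ! p) (as ! u 0) * P (take p gs @ drop (Suc p) gs) k' (\<lambda>j. u (Suc j))"
        unfolding k' using p True k' by (intro P_split) auto
      then show "q ^ p * P ((\<lambda>x. f x * (gs ! p) x) # (take p gs @ drop (Suc p) gs)) k u =
            q ^ p * f (as ! (u 0)) * P gs k (ins p (u 0) (\<lambda>j. u (Suc j)))"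
        using k' by (simp add: P_cons)
    qed
  next
    case False
    have "P ((\<lambda>x. f x * (gs ! p) x) # (take p gs @ drop (Suc p) gs)) k u = 0" if "p < length gs" for p
      using False that by (auto simp: P_def)
    moreover have "P gs k v = 0" for v using False by (simp add: P_def)
    ultimately show ?thesis by simp
  qed
  finally show ?thesis .
qed

lemma Ph_T:
  assumes "stepS f" "\<forall>g\<in>set gs. stepS g"
  shows "Ph (acre f gs @ aann q f gs @ pop q f gs) k u = Lop q f (P gs) k u"
  unfolding Ph_append Ph_acre Ph_aann[OF assms] Ph_pop Lop_def by simp

lemma Lop_add: "Lop q f (\<lambda>k u. A k u + B k u) k u = Lop q f A k u + Lop q f B k u"
  by (simp add: Lop_def algebra_simps sum.distrib)

lemma Lop_scale: "Lop q f (\<lambda>k u. c * A k u) k u = c * Lop q f A k u"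
  by (simp add: Lop_def algebra_simps sum_distrib_left)

lemma Lop_zero: "Lop q f (\<lambda>k u. 0) k u = 0"
  by (simp add: Lop_def)

lemma Lop_cong:
  assumes "\<And>k u. A k u = B k u"
  shows "Lop q f A k u = Lop q f B k u"
proof -
  have "A = B" using assms by (intro ext) auto
  then show ?thesis by simp
qed

lemma Lop_sum_list:
  "Lop q f (\<lambda>k u. sum_list (map (\<lambda>x. c x * h x k u) xs)) k u = sum_list (map (\<lambda>x. c x * Lop q f (h x) k u) xs)"
proof (induction xs arbitrary: k u)
  case Nil
  then show ?case by (simp add: Lop_zero)
next
  case (Cons x xs)
  have "Lop q f (\<lambda>k u. sum_list (map (\<lambda>x. c x * h x k u) (x # xs))) k u
      = Lop q f (\<lambda>k u. c x * h x k u + sum_list (map (\<lambda>x. c x * h x k u) xs)) k u" by simp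
  also have "\<dots> = c x * Lop q f (h x) k u + Lop q f (\<lambda>k u. sum_list (map (\<lambda>x. c x * h x k u) xs)) k u"
    by (simp add: Lop_add Lop_scale)
  finally show ?case using Cons by simp
qed

lemma Lop_sum:
  assumes "finite S"
  shows "Lop q f (\<lambda>k u. \<Sum>x\<in>S. c x * h x k u) k u = (\<Sum>x\<in>S. c x * Lop q f (h x) k u)"
  using assms
proof (induction S arbitrary: k u rule: finite_induct)
  case empty
  then show ?case by (simp add: Lop_zero)
next
  case (insert x S)
  have "Lop q f (\<lambda>k u. \<Sum>x\<in>insert x S. c x * h x k u) k u
      = Lop q f (\<lambda>k u. c x * h x k u + (\<Sum>x\<in>S. c x * h x k u)) k u" using insert by simp
  also have "\<dots> = c x * Lop q f (h x) k u + Lop q f (\<lambda>k u. \<Sum>x\<in>S. c x * h x k u) k u"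
    by (simp add: Lop_add Lop_scale)
  finally show ?case using insert by simp
qed

definition XF :: "real \<Rightarrow> (real \<Rightarrow> real) \<Rightarrow> fvec \<Rightarrow> fvec" where
  "XF q f = op_lin (\<lambda>gs. acre f gs @ aann q f gs @ pop q f gs)"

lemma Ph_XF:
  assumes "stepS f" "goodv v"
  shows "Ph (XF q f v) k u = Lop q f (Ph v) k u"
proof -
  have "Ph (XF q f v) k u = sum_list (map (\<lambda>(c, gs). c * Lop q f (P gs) k u) v)"
    unfolding XF_def Ph_op_lin using assms(2)
    by (intro arg_cong[where f = sum_list] map_cong refl) (auto simp: goodv_def Ph_T[OF assms(1)] simp del: Ph_append)
  also have "\<dots> = sum_list (map (\<lambda>x. fst x * Lop q f (P (snd x)) k u) v)"
    by (induction v) auto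
  also have "\<dots> = Lop q f (\<lambda>k u. sum_list (map (\<lambda>x. fst x * P (snd x) k u) v)) k u"
    by (rule Lop_sum_list[symmetric])
  also have "\<dots> = Lop q f (Ph v) k u"
    unfolding Ph_def by (intro Lop_cong) (induction v, auto)
  finally show ?thesis .
qed

lemma goodv_XF:
  assumes "stepS f" "goodv v"
  shows "goodv (XF q f v)"
proof -
  have "\<forall>g\<in>set gs. stepS g" if "(c, gs) \<in> set v" for c gs
    using assms(2) that by (auto simp: goodv_def)
  then show ?thesis using assms(1)
    by (fastforce simp: goodv_def XF_def op_lin_def vscale_def acre_def aann_def pop_def
        intro: stepS_mult dest: in_set_takeD in_set_dropD)
qed

lemma goodv_vsub: "goodv v \<Longrightarrow> goodv v' \<Longrightarrow> goodv (vsub v v')"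
  by (auto simp: goodv_def vsub_def vscale_def)

lemma goodv_Omega: "goodv Omega"
  by (simp add: goodv_def Omega_def)

lemma Xop_XF: "Xop q a = XF q (indicator {0..<a})"
  by (simp add: Xop_def XF_def)

definition inr :: "nat \<Rightarrow> (nat \<Rightarrow> nat) \<Rightarrow> bool" where
  "inr k u \<longleftrightarrow> (\<forall>j<k. u j < N)"

lemma Lop_cong_inr:
  assumes "\<And>k u. inr k u \<Longrightarrow> A k u = B k u" "inr k u"
  shows "Lop q f A k u = Lop q f B k u"
proof -
  have 1: "(if k = 0 then 0 else f (as ! (u 0)) * A (k - 1) (\<lambda>j. u (Suc j)))
         = (if k = 0 then 0 else f (as ! (u 0)) * B (k - 1) (\<lambda>j. u (Suc j)))"
    using assms by (auto simp: inr_def)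
  have "inr (Suc k) (ins p i u)" if "p < Suc k" "i < N" for p i
    using assms(2) that unfolding inr_def ins_def by auto
  then have 2: "(\<Sum>p<Suc k. q ^ p * (\<Sum>i<N. f (as ! i) * w i * A (Suc k) (ins p i u)))
     = (\<Sum>p<Suc k. q ^ p * (\<Sum>i<N. f (as ! i) * w i * B (Suc k) (ins p i u)))"
    using assms(1) by (intro sum.cong refl) auto
  have "inr k (ins p (u 0) (\<lambda>j. u (Suc j)))" if "p < k" for p
    using assms(2) that unfolding inr_def ins_def by auto
  then have 3: "(\<Sum>p<k. q ^ p * f (as ! (u 0)) * A k (ins p (u 0) (\<lambda>j. u (Suc j))))
     = (\<Sum>p<k. q ^ p * f (as ! (u 0)) * B k (ins p (u 0) (\<lambda>j. u (Suc j))))"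
    using assms(1) by (intro sum.cong refl) auto
  show ?thesis unfolding Lop_def 1 2 3 ..
qed

lemma Lop_diff_f: "Lop q f1 A k u - Lop q f0 A k u = Lop q (\<lambda>x. f1 x - f0 x) A k u"
proof -
  have a: "(if k = 0 then 0 else f1 (as ! (u 0)) * A (k - 1) (\<lambda>j. u (Suc j))) - (if k = 0 then 0 else f0 (as ! (u 0)) * A (k - 1) (\<lambda>j. u (Suc j)))
     = (if k = 0 then 0 else (f1 (as ! (u 0)) - f0 (as ! (u 0))) * A (k - 1) (\<lambda>j. u (Suc j)))"
    by (simp add: left_diff_distrib)
  have b: "(\<Sum>p<Suc k. q ^ p * (\<Sum>i<N. f1 (as ! i) * w i * A (Suc k) (ins p i u)))
     - (\<Sum>p<Suc k. q ^ p * (\<Sum>i<N. f0 (as ! i) * w i * A (Suc k) (ins p i u)))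
     = (\<Sum>p<Suc k. q ^ p * (\<Sum>i<N. (f1 (as ! i) - f0 (as ! i)) * w i * A (Suc k) (ins p i u)))"
    by (subst sum_subtractf[symmetric], intro sum.cong refl, subst right_diff_distrib[symmetric],
        subst sum_subtractf[symmetric], simp add: left_diff_distrib)
  have c: "(\<Sum>p<k. q ^ p * f1 (as ! (u 0)) * A k (ins p (u 0) (\<lambda>j. u (Suc j))))
     - (\<Sum>p<k. q ^ p * f0 (as ! (u 0)) * A k (ins p (u 0) (\<lambda>j. u (Suc j))))
     = (\<Sum>p<k. q ^ p * (f1 (as ! (u 0)) - f0 (as ! (u 0))) * A k (ins p (u 0) (\<lambda>j. u (Suc j))))"
    by (subst sum_subtractf[symmetric], intro sum.cong refl, simp add: algebra_simps)
  show ?thesis unfolding Lop_def using a b c by simp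
qed

definition dl :: "nat list \<Rightarrow> nat \<Rightarrow> (nat \<Rightarrow> nat) \<Rightarrow> real" where
  "dl s k u = (if k = length s \<and> (\<forall>j<k. u j = s ! j) then 1 else 0)"

lemma Lop_e_dl:
  assumes i: "i < N" "i \<notin> set s" and e: "\<And>j. j < N \<Longrightarrow> e (as ! j) = (if j = i then 1 else 0)"
    and u: "inr k u"
  shows "Lop q e (dl s) k u = dl (i # s) k u"
proof -
  have T2: "e (as ! i') * w i' * dl s (Suc k) (ins p i' u) = 0" if "i' < N" "p < Suc k" for i' p
  proof (cases "i' = i")
    case True
    have "\<not> (Suc k = length s \<and> (\<forall>j<Suc k. ins p i u j = s ! j))"
    proof
      assume h: "Suc k = length s \<and> (\<forall>j<Suc k. ins p i u j = s ! j)"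
      then have "i = s ! p" using that by (auto simp: ins_def)
      then show False using h that i by auto
    qed
    then have "dl s (Suc k) (ins p i u) = 0" unfolding dl_def by (rule if_not_P)
    then show ?thesis using True by simp
  qed (use e that in auto)
  have T3: "q ^ p * e (as ! (u 0)) * dl s k (ins p (u 0) (\<lambda>j. u (Suc j))) = 0" if "p < k" for p
  proof (cases "u 0 = i")
    case True
    have "\<not> (k = length s \<and> (\<forall>j<k. ins p (u 0) (\<lambda>j. u (Suc j)) j = s ! j))"
    proof
      assume h: "k = length s \<and> (\<forall>j<k. ins p (u 0) (\<lambda>j. u (Suc j)) j = s ! j)"
      then have "u 0 = s ! p" using that by (auto simp: ins_def)
      then show False using h that i True by auto
    qed
    then have "dl s k (ins p (u 0) (\<lambda>j. u (Suc j))) = 0" unfolding dl_def by (rule if_not_P)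
    then show ?thesis by simp
  next
    case False
    have "u 0 < N" using u that by (auto simp: inr_def)
    then show ?thesis using e False by simp
  qed
  have T1: "(if k = 0 then 0 else e (as ! (u 0)) * dl s (k - 1) (\<lambda>j. u (Suc j))) = dl (i # s) k u"
  proof (cases k)
    case 0
    then show ?thesis by (simp add: dl_def)
  next
    case (Suc k')
    have "u 0 < N" using u Suc by (auto simp: inr_def)
    then show ?thesis using Suc e by (auto simp: dl_def All_less_Suc2)
  qed
  have S2: "(\<Sum>p<Suc k. q ^ p * (\<Sum>i<N. e (as ! i) * w i * dl s (Suc k) (ins p i u))) = 0"
  proof (intro sum.neutral ballI)
    fix p assume "p \<in> {..<Suc k}"
    then have "(\<Sum>i<N. e (as ! i) * w i * dl s (Suc k) (ins p i u)) = 0"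
      using T2 by (intro sum.neutral ballI) auto
    then show "q ^ p * (\<Sum>i<N. e (as ! i) * w i * dl s (Suc k) (ins p i u)) = 0" by simp
  qed
  have S3: "(\<Sum>p<k. q ^ p * e (as ! (u 0)) * dl s k (ins p (u 0) (\<lambda>j. u (Suc j)))) = 0"
    using T3 by (intro sum.neutral ballI) auto
  show ?thesis unfolding Lop_def S2 S3 T1 by simp
qed

definition Xi :: "real \<Rightarrow> nat \<Rightarrow> fvec \<Rightarrow> fvec" where
  "Xi q i v = vsub (Xop q (as ! Suc i) v) (Xop q (as ! i) v)"

lemma foldr_Xi:
  assumes "distinct s" "set s \<subseteq> {..<N}"
  shows "goodv (foldr (Xi q) s Omega) \<and> (\<forall>k u. inr k u \<longrightarrow> Ph (foldr (Xi q) s Omega) k u = dl s k u)"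
  using assms
proof (induction s)
  case Nil
  then show ?case by (auto simp: goodv_Omega Ph_Omega dl_def)
next
  case (Cons i s)
  define v where "v = foldr (Xi q) s Omega"
  have IH: "goodv v" "\<And>k u. inr k u \<Longrightarrow> Ph v k u = dl s k u" using Cons by (auto simp: v_def)
  have i: "i < N" "i \<notin> set s" using Cons.prems by auto
  have st1: "stepS (indicator {0..<as ! Suc i})" and st0: "stepS (indicator {0..<as ! i})"
    using i by (auto intro!: stepS_ind)
  have good: "goodv (Xi q i v)" unfolding Xi_def Xop_XF
    by (intro goodv_vsub goodv_XF st1 st0 IH)
  have "Ph (Xi q i v) k u = dl (i # s) k u" if u: "inr k u" for k u
  proof -
    have "Ph (Xi q i v) k u = Lop q (\<lambda>x. indicator {0..<as ! Suc i} x - indicator {0..<as ! i} x) (Ph v) k u"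
      unfolding Xi_def Xop_XF Ph_vsub Ph_XF[OF st1 IH(1)] Ph_XF[OF st0 IH(1)] Lop_diff_f ..
    also have "\<dots> = Lop q (\<lambda>x. indicator {0..<as ! Suc i} x - indicator {0..<as ! i} x) (dl s) k u"
      by (rule Lop_cong_inr[OF IH(2) u])
    also have "\<dots> = dl (i # s) k u"
      using i u by (intro Lop_e_dl) (auto simp: ind_at)
    finally show ?thesis .
  qed
  then show ?case using good by (simp add: v_def)
qed

lemma goodv_concat: "(\<And>v. v \<in> set vs \<Longrightarrow> goodv v) \<Longrightarrow> goodv (concat vs)"
  by (auto simp: goodv_def)

lemma goodv_vscale: "goodv v \<Longrightarrow> goodv (vscale c v)"
  by (auto simp: goodv_def vscale_def)

lemma psi_eq: "psi_vec q m as = concat (map (\<lambda>s. foldr (Xi q) s Omega) (filter distinct (List.n_lists m [0..<N])))"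
  unfolding psi_vec_def Xi_def Let_def ..

lemma goodv_psi: "goodv (psi_vec q m as)"
  unfolding psi_eq
  by (intro goodv_concat) (auto simp: set_n_lists dest!: foldr_Xi[where q = q] )

lemma Ph_psi:
  assumes u: "inr k u"
  shows "Ph (psi_vec q m as) k u = (if k = m \<and> inj_on u {..<m} then 1 else 0)"
proof -
  define L where "L = filter distinct (List.n_lists m [0..<N])"
  have dL: "distinct L" unfolding L_def by (intro distinct_filter distinct_n_lists) simp
  have sL: "set L = {s. distinct s \<and> length s = m \<and> set s \<subseteq> {0..<N}}"
    unfolding L_def by (auto simp: set_n_lists)
  have "Ph (psi_vec q m as) k u = sum_list (map (\<lambda>s. Ph (foldr (Xi q) s Omega) k u) L)"
    unfolding psi_eq Ph_concat L_def by (simp add: comp_def)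
  also have "\<dots> = sum_list (map (\<lambda>s. dl s k u) L)"
  proof (intro arg_cong[where f = sum_list] map_cong refl)
    fix s assume "s \<in> set L"
    then have "distinct s" "set s \<subseteq> {..<N}" by (auto simp: sL)
    then show "Ph (foldr (Xi q) s Omega) k u = dl s k u" using foldr_Xi u by blast
  qed
  also have "\<dots> = (\<Sum>s\<in>set L. dl s k u)"
    using dL by (simp add: sum_list_distinct_conv_sum_set)
  also have "\<dots> = (if k = m \<and> inj_on u {..<m} then 1 else 0)"
  proof (cases "k = m")
    case False
    then show ?thesis by (auto simp: sL dl_def intro!: sum.neutral)
  next
    case True
    define s0 where "s0 = map u [0..<m]"
    have "(\<Sum>s\<in>set L. dl s k u) = (\<Sum>s\<in>set L. if s = s0 then 1 else 0)"
      using True by (intro sum.cong refl) (auto simp: sL dl_def s0_def list_eq_iff_nth_eq)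
    also have "\<dots> = (if s0 \<in> set L then 1 else 0)" by simp
    also have "s0 \<in> set L \<longleftrightarrow> inj_on u {..<m}"
      using u True by (auto simp: sL s0_def distinct_map inr_def atLeast0LessThan)
    finally show ?thesis using True by simp
  qed
  finally show ?thesis .
qed

abbreviation tN where "tN \<equiv> as ! N"

lemma stepS_T: "stepS (indicator {0..<tN})"
  by (rule stepS_ind) simp

lemma T_at: "j < N \<Longrightarrow> indicator {0..<tN} (as ! j) = (1::real)"
  using ind_at[of N j] by simp

lemma sum_w: "(\<Sum>i<N. w i) = tN"
  unfolding w_def using sum_lessThan_telescope[of "\<lambda>i. as ! i" N] hd0 by simp

lemma goodv_pow: "goodv ((Xop q tN ^^ i) Omega)"
proof (induction i)
  case 0
  then show ?case by (simp add: goodv_Omega)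
next
  case (Suc i)
  then show ?case unfolding Xop_XF funpow.simps comp_def by (intro goodv_XF stepS_T)
qed

definition Psi :: "real \<Rightarrow> nat \<Rightarrow> nat \<Rightarrow> (nat \<Rightarrow> nat) \<Rightarrow> real" where
  "Psi q i k u = Ph ((Xop q tN ^^ i) Omega) k u"

lemma Psi_Suc: "Psi q (Suc i) k u = Lop q (indicator {0..<tN}) (Psi q i) k u"
proof -
  have "Psi q (Suc i) k u = Lop q (indicator {0..<tN}) (Ph ((Xop q tN ^^ i) Omega)) k u"
    unfolding Psi_def funpow.simps comp_def Xop_XF by (rule Ph_XF[OF stepS_T goodv_pow[unfolded Xop_XF]])
  also have "Ph ((Xop q tN ^^ i) Omega) = Psi q i" by (intro ext) (simp add: Psi_def)
  finally show ?thesis .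
qed

definition V :: "real \<Rightarrow> real poly \<Rightarrow> nat \<Rightarrow> (nat \<Rightarrow> nat) \<Rightarrow> real" where
  "V q p k u = (\<Sum>i<Suc (degree p). coeff p i * Psi q i k u)"

lemma Ph_opoly: "Ph (opoly p (Xop q tN) Omega) k u = V q p k u"
  unfolding opoly_def Ph_concat V_def Psi_def by (simp add: comp_def sum_list_upt_eq)

lemma V_ext: "degree p < n \<Longrightarrow> V q p k u = (\<Sum>i<n. coeff p i * Psi q i k u)"
  unfolding V_def by (intro sum.mono_neutral_left) (auto simp: coeff_eq_0)

lemma V_add: "V q (p + r) k u = V q p k u + V q r k u"
proof -
  define n where "n = Suc (degree p + degree r)"
  have "degree (p + r) < n" using degree_add_le_max[of p r] by (auto simp: n_def)
  then show ?thesis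
    by (simp add: V_ext[of _ n] n_def sum.distrib algebra_simps)
qed

lemma V_smult: "V q (smult c p) k u = c * V q p k u"
proof -
  have "degree (smult c p) < Suc (degree p)" by simp
  then show ?thesis
    by (simp add: V_ext[of _ "Suc (degree p)"] V_def sum_distrib_left algebra_simps)
qed

lemma V_diff: "V q (p - r) k u = V q p k u - V q r k u"
  using V_add[of q p "smult (-1) r" k u] V_smult[of q "-1" r k u] by (simp add: smult_minus_left)

lemma V_pCons0: "V q (pCons 0 p) k u = Lop q (indicator {0..<tN}) (V q p) k u"
proof -
  define n where "n = Suc (degree p)"
  have "degree (pCons 0 p) < Suc n" using degree_pCons_le[of 0 p] by (simp add: n_def)
  then have "V q (pCons 0 p) k u = (\<Sum>i<Suc n. coeff (pCons 0 p) i * Psi q i k u)" by (rule V_ext)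
  also have "\<dots> = (\<Sum>i<n. coeff p i * Psi q (Suc i) k u)"
    by (subst sum.lessThan_Suc_shift) simp
  also have "\<dots> = (\<Sum>i\<in>{..<n}. coeff p i * Lop q (indicator {0..<tN}) (Psi q i) k u)"
    by (simp add: Psi_Suc)
  also have "\<dots> = Lop q (indicator {0..<tN}) (\<lambda>k u. \<Sum>i\<in>{..<n}. coeff p i * Psi q i k u) k u"
    by (rule Lop_sum[symmetric]) simp
  also have "\<dots> = Lop q (indicator {0..<tN}) (V q p) k u"
    by (intro Lop_cong) (simp add: V_def n_def)
  finally show ?thesis .
qed

lemma V_one: "V q 1 k u = (if k = 0 then 1 else 0)"
  by (simp add: V_def Psi_def Ph_Omega)

lemma qnum_Suc: "qnum q (Suc n) = qnum q n + q ^ n"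
  by (simp add: qnum_def)

lemma LopT_delta:
  assumes u: "inr k u"
  shows "Lop q (indicator {0..<tN}) (\<lambda>k u. if k = n then 1 else 0) k u
     = (if k = Suc n then 1 else 0) + qnum q n * (if k = n then 1 else 0) + tN * qnum q n * (if Suc k = n then 1 else 0)"
proof -
  have T1: "(if k = 0 then 0 else indicator {0..<tN} (as ! (u 0)) * (if k - 1 = n then 1 else 0))
      = (if k = Suc n then 1 else (0::real))"
    using u T_at[of "u 0"] by (auto simp: inr_def)
  have T2: "(\<Sum>p<Suc k. q ^ p * (\<Sum>i<N. indicator {0..<tN} (as ! i) * w i * (if Suc k = n then 1 else 0)))
      = tN * qnum q n * (if Suc k = n then 1 else 0)"
  proof -
    have "(\<Sum>i<N. indicator {0..<tN} (as ! i) * w i * (if Suc k = n then 1 else 0)) = tN * (if Suc k = n then 1 else (0::real))"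
      using T_at sum_w by (simp add: sum_distrib_right[symmetric])
    then show ?thesis by (auto simp: qnum_def sum_distrib_left sum_distrib_right algebra_simps)
  qed
  have T3: "(\<Sum>p<k. q ^ p * indicator {0..<tN} (as ! (u 0)) * (if k = n then 1 else 0))
     = qnum q n * (if k = n then 1 else 0)"
  proof (cases k)
    case 0
    then show ?thesis by (simp add: qnum_def)
  next
    case (Suc k')
    then have "indicator {0..<tN} (as ! (u 0)) = (1::real)" using u T_at[of "u 0"] by (auto simp: inr_def)
    then show ?thesis by (auto simp: qnum_def sum_distrib_right)
  qed
  show ?thesis unfolding Lop_def ins_def using T1 T2 T3 by simp
qed

lemma tx: "[:0, 1:] * p = pCons 0 (p :: real poly)"
  by (simp only: mult_pCons_left smult_0_left add_0_left smult_1_left mult_zero_left pCons_0_0 add_0_right)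

lemma V_Cq:
  "(\<forall>k u. inr k u \<longrightarrow> V q (Cq q tN m) k u = (if k = m then 1 else 0)) \<and>
   (\<forall>k u. inr k u \<longrightarrow> V q (Cq q tN (Suc m)) k u = (if k = Suc m then 1 else 0))"
proof (induction m)
  case 0
  have "V q (Cq q tN (Suc 0)) k u = (if k = Suc 0 then 1 else 0)" if "inr k u" for k u
  proof -
    have q0: "qnum q 0 = 0" by (simp add: qnum_def)
    have "Cq q tN (Suc 0) = [:0, 1:] * 1"
      by (simp only: Cq.simps(2) q0 smult_0_left smult_0_right diff_zero)
    also have "\<dots> = pCons 0 1" by (rule tx)
    finally have e: "Cq q tN (Suc 0) = pCons 0 1" .
    have "V q (Cq q tN (Suc 0)) k u = Lop q (indicator {0..<tN}) (V q 1) k u"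
      unfolding e by (rule V_pCons0)
    also have "\<dots> = Lop q (indicator {0..<tN}) (\<lambda>k u. if k = 0 then 1 else 0) k u"
      by (rule Lop_cong) (rule V_one)
    also have "\<dots> = (if k = Suc 0 then 1 else 0)"
      using LopT_delta[OF that, of q 0] q0 by simp
    finally show ?thesis .
  qed
  moreover have "V q (Cq q tN 0) k u = (if k = 0 then 1 else 0)" for k u
    unfolding Cq.simps(1) by (rule V_one)
  ultimately show ?case by blast
next
  case (Suc m)
  have "V q (Cq q tN (Suc (Suc m))) k u = (if k = Suc (Suc m) then 1 else 0)" if u: "inr k u" for k u
  proof -
    have e: "Cq q tN (Suc (Suc m)) = pCons 0 (Cq q tN (Suc m)) - smult (qnum q (Suc m)) (Cq q tN (Suc m))
        - smult (tN * qnum q (Suc m)) (Cq q tN m)"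
      by (simp only: Cq.simps(3) tx)
    have "V q (Cq q tN (Suc (Suc m))) k u = Lop q (indicator {0..<tN}) (V q (Cq q tN (Suc m))) k u
        - qnum q (Suc m) * V q (Cq q tN (Suc m)) k u - tN * qnum q (Suc m) * V q (Cq q tN m) k u"
      by (simp only: e V_diff V_smult V_pCons0)
    also have "Lop q (indicator {0..<tN}) (V q (Cq q tN (Suc m))) k u
       = Lop q (indicator {0..<tN}) (\<lambda>k u. if k = Suc m then 1 else 0) k u"
      using Suc.IH u by (intro Lop_cong_inr) blast+
    also have "\<dots> = (if k = Suc (Suc m) then 1 else 0) + qnum q (Suc m) * (if k = Suc m then 1 else 0)
        + tN * qnum q (Suc m) * (if Suc k = Suc m then 1 else 0)"
      by (rule LopT_delta[OF u])
    also have "V q (Cq q tN (Suc m)) k u = (if k = Suc m then 1 else 0)" using Suc.IH u by blast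
    also have "V q (Cq q tN m) k u = (if k = m then 1 else 0)" using Suc.IH u by blast
    finally show ?thesis by simp
  qed
  then show ?case using Suc.IH by blast
qed

definition W :: "nat \<Rightarrow> (nat \<Rightarrow> nat) \<Rightarrow> real" where
  "W k u = (\<Prod>j<k. w (u j))"

abbreviation PU :: "nat \<Rightarrow> (nat \<Rightarrow> nat) set" where
  "PU k \<equiv> PiE {..<k} (\<lambda>_. {..<N})"

definition G :: "real \<Rightarrow> fn list \<Rightarrow> fn list \<Rightarrow> nat \<Rightarrow> real" where
  "G q gs hs k = (\<Sum>\<sigma>\<in>{\<sigma>. \<sigma> permutes {..<k}}. q ^ inversions_of k \<sigma> *
      (\<Sum>u\<in>PU k. W k u * P gs k u * P hs k (u \<circ> inv \<sigma>)))"

lemma finite_perms: "finite {\<sigma>. \<sigma> permutes {..<k::nat}}"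
  by (rule finite_permutations) simp

lemma prod_perm_reindex:
  assumes "\<sigma> permutes {..<k}"
  shows "(\<Prod>j<k. (hs ! (\<sigma> j)) (as ! (u j))) = (\<Prod>l<k. (hs ! l) (as ! ((u \<circ> inv \<sigma>) l)))"
proof -
  have "(\<Prod>l<k. (hs ! l) (as ! ((u \<circ> inv \<sigma>) l))) = (\<Prod>j<k. ((\<lambda>l. (hs ! l) (as ! ((u \<circ> inv \<sigma>) l))) \<circ> \<sigma>) j)"
    by (rule prod.permute[OF assms])
  also have "\<dots> = (\<Prod>j<k. (hs ! (\<sigma> j)) (as ! (u j)))"
    using permutes_inverses(2)[OF assms] by simp
  finally show ?thesis by simp
qed

lemma qip_G:
  assumes gs: "\<forall>g\<in>set gs. stepS g" and hs: "\<forall>h\<in>set hs. stepS h"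
  shows "qip q gs hs = G q gs hs (length gs)"
proof (cases "length gs = length hs")
  case False
  then show ?thesis by (simp add: qip_def G_def P_def)
next
  case True
  define k where "k = length gs"
  have "(\<Prod>j<k. l2inner (gs ! j) (hs ! \<sigma> j)) = (\<Sum>u\<in>PU k. W k u * P gs k u * P hs k (u \<circ> inv \<sigma>))"
    if \<sigma>: "\<sigma> permutes {..<k}" for \<sigma>
  proof -
    have "(\<Prod>j<k. l2inner (gs ! j) (hs ! \<sigma> j)) = (\<Prod>j<k. \<Sum>i<N. (gs ! j) (as ! i) * (hs ! \<sigma> j) (as ! i) * w i)"
    proof (intro prod.cong refl)
      fix j assume j: "j \<in> {..<k}"
      then have "\<sigma> j < k" using permutes_in_image[OF \<sigma>] by auto
      then show "l2inner (gs ! j) (hs ! \<sigma> j) = (\<Sum>i<N. (gs ! j) (as ! i) * (hs ! \<sigma> j) (as ! i) * w i)"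
        using gs hs j True by (intro l2inner_step) (auto simp: k_def)
    qed
    also have "\<dots> = (\<Sum>u\<in>PU k. \<Prod>j<k. (gs ! j) (as ! u j) * (hs ! \<sigma> j) (as ! u j) * w (u j))"
      by (rule prod_sum_PiE) auto
    also have "\<dots> = (\<Sum>u\<in>PU k. W k u * P gs k u * P hs k (u \<circ> inv \<sigma>))"
    proof (intro sum.cong refl)
      fix u
      show "(\<Prod>j<k. (gs ! j) (as ! u j) * (hs ! \<sigma> j) (as ! u j) * w (u j)) = W k u * P gs k u * P hs k (u \<circ> inv \<sigma>)"
        unfolding W_def P_def using True prod_perm_reindex[OF \<sigma>, of hs u, symmetric]
        by (simp add: prod.distrib k_def mult_ac)
    qed
    finally show ?thesis .
  qed
  moreover have kh: "length hs = k" using True by (simp add: k_def)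
  ultimately show ?thesis unfolding qip_def G_def k_def[symmetric] kh if_P[OF refl]
    by (intro sum.cong refl) auto
qed

lemma G_zero: "length gs \<noteq> k \<Longrightarrow> G q gs hs k = 0"
  by (simp add: G_def P_def)

lemma qip_sumK:
  assumes "\<forall>g\<in>set gs. stepS g" "\<forall>h\<in>set hs. stepS h" "finite K" "length gs \<in> K"
  shows "qip q gs hs = (\<Sum>k\<in>K. G q gs hs k)"
proof -
  have "(\<Sum>k\<in>K. G q gs hs k) = G q gs hs (length gs) + (\<Sum>k\<in>K - {length gs}. G q gs hs k)"
    using assms by (subst sum.remove) auto
  also have "(\<Sum>k\<in>K - {length gs}. G q gs hs k) = 0"
    by (intro sum.neutral) (auto simp: G_zero)
  finally show ?thesis using qip_G[OF assms(1,2)] by simp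
qed

lemma swap3:
  fixes H :: "'a \<Rightarrow> 'b \<Rightarrow> 'c \<Rightarrow> real"
  shows "(\<Sum>a\<in>A. \<Sum>b\<in>B. \<Sum>z\<in>Z. H a b z) = (\<Sum>z\<in>Z. \<Sum>a\<in>A. \<Sum>b\<in>B. H a b z)"
proof -
  have "(\<Sum>a\<in>A. \<Sum>b\<in>B. \<Sum>z\<in>Z. H a b z) = (\<Sum>a\<in>A. \<Sum>z\<in>Z. \<Sum>b\<in>B. H a b z)"
    by (intro sum.cong refl) (rule sum.swap)
  also have "\<dots> = (\<Sum>z\<in>Z. \<Sum>a\<in>A. \<Sum>b\<in>B. H a b z)"
    by (rule sum.swap)
  finally show ?thesis .
qed

lemma Ph_nth: "Ph v k u = (\<Sum>a<length v. fst (v ! a) * P (snd (v ! a)) k u)"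
  unfolding Ph_def sum_list_sum_nth by (simp add: case_prod_beta atLeast0LessThan)

lemma vinner_formula:
  assumes gx: "goodv x" and gy: "goodv y"
  shows "vinner q x y = (\<Sum>k\<in>(\<lambda>p. length (snd p)) ` set x. \<Sum>\<sigma>\<in>{\<sigma>. \<sigma> permutes {..<k}}. q ^ inversions_of k \<sigma> *
      (\<Sum>u\<in>PU k. W k u * Ph x k u * Ph y k (u \<circ> inv \<sigma>)))"
proof -
  define K where "K = (\<lambda>p. length (snd p)) ` set x"
  have fK: "finite K" by (simp add: K_def)
  define c where "c a = fst (x ! a)" for a
  define gs where "gs a = snd (x ! a)" for a
  define d where "d b = fst (y ! b)" for b
  define hs where "hs b = snd (y ! b)" for b
  have "vinner q x y = (\<Sum>a<length x. \<Sum>b<length y. c a * d b * qip q (gs a) (hs b))"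
    unfolding vinner_def sum_list_sum_nth c_def d_def gs_def hs_def
    by (simp add: case_prod_beta atLeast0LessThan)
  also have "\<dots> = (\<Sum>a<length x. \<Sum>b<length y. \<Sum>k\<in>K. c a * d b * G q (gs a) (hs b) k)"
  proof (intro sum.cong refl)
    fix a b assume a: "a \<in> {..<length x}" and b: "b \<in> {..<length y}"
    have "x ! a \<in> set x" "y ! b \<in> set y" using a b by auto
    then have "\<forall>g\<in>set (gs a). stepS g" "\<forall>h\<in>set (hs b). stepS h" "length (gs a) \<in> K"
      using gx gy by (auto simp: goodv_def gs_def hs_def K_def)
    then show "c a * d b * qip q (gs a) (hs b) = (\<Sum>k\<in>K. c a * d b * G q (gs a) (hs b) k)"
      using qip_sumK fK by (simp add: sum_distrib_left)
  qed
  also have "\<dots> = (\<Sum>k\<in>K. \<Sum>a<length x. \<Sum>b<length y. c a * d b * G q (gs a) (hs b) k)"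
    by (rule swap3)
  also have "\<dots> = (\<Sum>k\<in>K. \<Sum>\<sigma>\<in>{\<sigma>. \<sigma> permutes {..<k}}. q ^ inversions_of k \<sigma> *
      (\<Sum>u\<in>PU k. W k u * Ph x k u * Ph y k (u \<circ> inv \<sigma>)))"
  proof (intro sum.cong refl)
    fix k
    have "(\<Sum>a<length x. \<Sum>b<length y. c a * d b * G q (gs a) (hs b) k)
       = (\<Sum>a<length x. \<Sum>b<length y. \<Sum>\<sigma>\<in>{\<sigma>. \<sigma> permutes {..<k}}. \<Sum>u\<in>PU k.
            q ^ inversions_of k \<sigma> * W k u * (c a * P (gs a) k u) * (d b * P (hs b) k (u \<circ> inv \<sigma>)))"
      unfolding G_def by (simp add: sum_distrib_left mult_ac)
    also have "\<dots> = (\<Sum>\<sigma>\<in>{\<sigma>. \<sigma> permutes {..<k}}. \<Sum>a<length x. \<Sum>b<length y. \<Sum>u\<in>PU k.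
            q ^ inversions_of k \<sigma> * W k u * (c a * P (gs a) k u) * (d b * P (hs b) k (u \<circ> inv \<sigma>)))"
      by (rule swap3)
    also have "\<dots> = (\<Sum>\<sigma>\<in>{\<sigma>. \<sigma> permutes {..<k}}. \<Sum>u\<in>PU k. \<Sum>a<length x. \<Sum>b<length y.
            q ^ inversions_of k \<sigma> * W k u * (c a * P (gs a) k u) * (d b * P (hs b) k (u \<circ> inv \<sigma>)))"
      by (intro sum.cong refl) (rule swap3)
    also have "\<dots> = (\<Sum>\<sigma>\<in>{\<sigma>. \<sigma> permutes {..<k}}. q ^ inversions_of k \<sigma> *
      (\<Sum>u\<in>PU k. W k u * Ph x k u * Ph y k (u \<circ> inv \<sigma>)))"
      unfolding Ph_nth c_def[symmetric] d_def[symmetric] gs_def[symmetric] hs_def[symmetric]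
      by (simp add: sum_distrib_left sum_product mult_ac)
    finally show "(\<Sum>a<length x. \<Sum>b<length y. c a * d b * G q (gs a) (hs b) k) = \<dots>" .
  qed
  finally show ?thesis unfolding K_def .
qed

lemma inr_PU: "u \<in> PU k \<Longrightarrow> inr k u"
  unfolding inr_def using PiE_mem[of u "{..<k}" "\<lambda>_. {..<N}"] by blast

lemma W_nonneg: "u \<in> PU k \<Longrightarrow> 0 \<le> W k u"
  unfolding W_def by (intro prod_nonneg) (use inr_PU w_nonneg in \<open>auto simp: inr_def\<close>)

lemma inr_inv:
  assumes "\<sigma> permutes {..<k}" "inr k u"
  shows "inr k (u \<circ> inv \<sigma>)"
  unfolding inr_def
proof (intro allI impI)
  fix j assume "j < k"
  then have "inv \<sigma> j \<in> {..<k}" using permutes_in_image[OF permutes_inv[OF assms(1)]] by simp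
  then show "(u \<circ> inv \<sigma>) j < N" using assms(2) by (simp add: inr_def)
qed

lemma w_le_mesh: "i < N \<Longrightarrow> w i \<le> mesh as"
proof -
  assume i: "i < N"
  have "zip as (tl as) ! i = (as ! i, as ! Suc i)" using i by (simp add: nth_tl)
  moreover have "i < length (zip as (tl as))" using i by simp
  ultimately have "(as ! i, as ! Suc i) \<in> set (zip as (tl as))" by (metis nth_mem)
  then have "w i \<in> set (map (\<lambda>(a, b). b - a) (zip as (tl as)))" unfolding w_def by force
  then show ?thesis unfolding mesh_def by (intro Max_ge) auto
qed

lemma mesh_nonneg: "0 \<le> mesh as"
  using w_le_mesh[of 0] w_nonneg[of 0] len2 by simp

lemma tN_nonneg: "0 \<le> tN"
  by (rule a_nonneg) simp

lemma pair_bound: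
  assumes ab: "a < m" "b < m" "a \<noteq> b"
  shows "(\<Sum>u\<in>PU m. W m u * (if u a = u b then 1 else 0)) \<le> mesh as * tN * tN ^ (m - 2)"
proof -
  define F where "F c j i = w i * (if j = a then (if i = c then 1 else 0) else 1) * (if j = b then (if i = c then 1 else 0) else (1::real))" for c j i
  have "(\<Sum>u\<in>PU m. W m u * (if u a = u b then 1 else 0)) = (\<Sum>u\<in>PU m. \<Sum>c<N. \<Prod>j<m. F c j (u j))"
  proof (intro sum.cong refl)
    fix u assume u: "u \<in> PU m"
    then have ua: "u a < N" "u b < N" using ab by (auto simp: PiE_def Pi_def)
    have "(\<Sum>c<N. \<Prod>j<m. F c j (u j)) = (\<Sum>c<N. W m u * ((if u a = c then 1 else 0) * (if u b = c then 1 else 0)))"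
    proof (intro sum.cong refl)
      fix c
      have "(\<Prod>j<m. F c j (u j)) = W m u * (\<Prod>j<m. if j = a then (if u j = c then 1 else 0) else 1) * (\<Prod>j<m. if j = b then (if u j = c then 1 else 0) else (1::real))"
        unfolding F_def W_def prod.distrib ..
      also have "\<dots> = W m u * ((if u a = c then 1 else 0) * (if u b = c then 1 else 0))"
        using ab by (simp add: prod.delta)
      finally show "(\<Prod>j<m. F c j (u j)) = W m u * ((if u a = c then 1 else 0) * (if u b = c then 1 else 0))" .
    qed
    also have "\<dots> = W m u * (\<Sum>c<N. (if u a = c then 1 else 0) * (if u b = c then 1 else (0::real)))"
      by (rule sum_distrib_left[symmetric])
    also have "(\<Sum>c<N. (if u a = c then 1 else 0) * (if u b = c then 1 else (0::real)))
        = (\<Sum>c<N. if c = u a then (if u b = u a then 1 else 0) else 0)"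
      by (intro sum.cong refl) auto
    also have "\<dots> = (if u b = u a then 1 else 0)"
      using ua by (subst sum.delta) auto
    also have "(if u b = u a then 1 else (0::real)) = (if u a = u b then 1 else 0)"
      by auto
    finally show "W m u * (if u a = u b then 1 else 0) = (\<Sum>c<N. \<Prod>j<m. F c j (u j))" ..
  qed
  also have "\<dots> = (\<Sum>c<N. \<Sum>u\<in>PU m. \<Prod>j<m. F c j (u j))"
    by (rule sum.swap)
  also have "\<dots> = (\<Sum>c<N. \<Prod>j<m. \<Sum>i<N. F c j i)"
    by (intro sum.cong refl prod_sum_PiE[symmetric]) auto
  also have "\<dots> = (\<Sum>c<N. \<Prod>j<m. if j = a \<or> j = b then w c else tN)"
  proof (intro sum.cong refl prod.cong)
    fix c j assume c: "c \<in> {..<N}" and j: "j \<in> {..<m}"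
    show "(\<Sum>i<N. F c j i) = (if j = a \<or> j = b then w c else tN)"
    proof (cases "j = a \<or> j = b")
      case True
      then have "(\<Sum>i<N. F c j i) = (\<Sum>i<N. if i = c then w c else 0)"
        using ab by (intro sum.cong refl) (auto simp: F_def)
      then show ?thesis using c True by simp
    next
      case False
      then show ?thesis using sum_w by (simp add: F_def)
    qed
  qed
  also have "\<dots> = (\<Sum>c<N. w c * w c * tN ^ (m - 2))"
  proof (intro sum.cong refl)
    fix c
    define g where "g j = (if j = a \<or> j = b then w c else tN)" for j
    have "(\<Prod>j<m. g j) = g a * (\<Prod>j\<in>{..<m} - {a}. g j)"
      using ab by (subst prod.remove[of _ a]) auto
    also have "(\<Prod>j\<in>{..<m} - {a}. g j) = g b * (\<Prod>j\<in>{..<m} - {a} - {b}. g j)"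
      using ab by (subst prod.remove[of _ b]) auto
    also have "(\<Prod>j\<in>{..<m} - {a} - {b}. g j) = (\<Prod>j\<in>{..<m} - {a} - {b}. tN)"
      by (intro prod.cong refl) (auto simp: g_def)
    also have "\<dots> = tN ^ (m - 2)"
      using ab by (simp add: card_Diff_singleton numeral_2_eq_2)
    finally show "(\<Prod>j<m. if j = a \<or> j = b then w c else tN) = w c * w c * tN ^ (m - 2)"
      by (simp add: g_def)
  qed
  also have "\<dots> \<le> (\<Sum>c<N. mesh as * w c * tN ^ (m - 2))"
    using w_le_mesh w_nonneg tN_nonneg by (intro sum_mono mult_right_mono mult_right_mono) auto
  also have "\<dots> = mesh as * tN * tN ^ (m - 2)"
    using sum_w by (simp add: sum_distrib_left[symmetric] sum_distrib_right[symmetric])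
  finally show ?thesis .
qed

lemma NI_bound:
  "(\<Sum>u\<in>PU m. W m u * (if inj_on u {..<m} then 0 else 1)) \<le> real m * real m * (mesh as * tN * tN ^ (m - 2))"
proof -
  define B where "B = mesh as * tN * tN ^ (m - 2)"
  have B0: "0 \<le> B" unfolding B_def using mesh_nonneg tN_nonneg by simp
  have "(\<Sum>u\<in>PU m. W m u * (if inj_on u {..<m} then 0 else 1))
     \<le> (\<Sum>u\<in>PU m. \<Sum>a<m. \<Sum>b<m. W m u * (if a \<noteq> b \<and> u a = u b then 1 else 0))"
  proof (intro sum_mono)
    fix u assume u: "u \<in> PU m"
    show "W m u * (if inj_on u {..<m} then 0 else 1) \<le> (\<Sum>a<m. \<Sum>b<m. W m u * (if a \<noteq> b \<and> u a = u b then 1 else 0))"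
    proof (cases "inj_on u {..<m}")
      case True
      then show ?thesis using W_nonneg[OF u] by (auto intro!: sum_nonneg)
    next
      case False
      then obtain a b where ab: "a < m" "b < m" "a \<noteq> b" "u a = u b" by (auto simp: inj_on_def)
      have "W m u = W m u * (if a \<noteq> b \<and> u a = u b then 1 else 0)" using ab by simp
      also have "\<dots> \<le> (\<Sum>b'<m. W m u * (if a \<noteq> b' \<and> u a = u b' then 1 else 0))"
        using ab W_nonneg[OF u] by (intro member_le_sum) auto
      also have "\<dots> \<le> (\<Sum>a<m. \<Sum>b<m. W m u * (if a \<noteq> b \<and> u a = u b then 1 else 0))"
        using ab W_nonneg[OF u] by (intro member_le_sum sum_nonneg) auto
      finally show ?thesis using False by simp
    qed
  qed
  also have "\<dots> = (\<Sum>a<m. \<Sum>b<m. \<Sum>u\<in>PU m. W m u * (if a \<noteq> b \<and> u a = u b then 1 else 0))"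
    by (rule swap3[symmetric])
  also have "\<dots> \<le> (\<Sum>a<m. \<Sum>b<m. B)"
  proof (intro sum_mono)
    fix a b assume a: "a \<in> {..<m}" and b: "b \<in> {..<m}"
    show "(\<Sum>u\<in>PU m. W m u * (if a \<noteq> b \<and> u a = u b then 1 else 0)) \<le> B"
    proof (cases "a = b")
      case True
      then show ?thesis using B0 by simp
    next
      case False
      then show ?thesis using pair_bound[of a m b] a b by (simp add: B_def)
    qed
  qed
  also have "\<dots> = real m * real m * B" by simp
  finally show ?thesis unfolding B_def .
qed

lemma goodv_opoly: "goodv (opoly p (Xop q tN) Omega)"
  unfolding opoly_def using goodv_pow[where q=q] by (intro goodv_concat) (auto intro!: goodv_vscale)

lemma D_bound:
  fixes m :: nat
  assumes q: "\<bar>q\<bar> \<le> 1"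
  defines "D \<equiv> vsub (psi_vec q m as) (opoly (Cq q tN m) (Xop q tN) Omega)"
  shows "vinner q D D \<le> fact m * (real m * real m * (mesh as * tN * tN ^ (m - 2)))"
proof -
  have gD: "goodv D" unfolding D_def by (intro goodv_vsub goodv_psi goodv_opoly)
  have PhD: "Ph D k u = (if k = m \<and> \<not> inj_on u {..<m} then -1 else 0)" if "inr k u" for k u
    using Ph_psi[OF that, of q m] V_Cq[of q m] that unfolding D_def Ph_vsub Ph_opoly by auto
  define K where "K = (\<lambda>p. length (snd p)) ` set D"
  define Z where "Z k = (\<Sum>\<sigma>\<in>{\<sigma>. \<sigma> permutes {..<k}}. q ^ inversions_of k \<sigma> *
      (\<Sum>u\<in>PU k. W k u * Ph D k u * Ph D k (u \<circ> inv \<sigma>)))" for k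
  have vf: "vinner q D D = (\<Sum>k\<in>K. Z k)"
    unfolding vinner_formula[OF gD gD] K_def Z_def ..
  have Z0: "Z k = 0" if "k \<noteq> m" for k
    unfolding Z_def using that PhD inr_PU by (intro sum.neutral ballI) (simp add: sum.neutral)
  have "(\<Sum>k\<in>K. Z k) = (\<Sum>k\<in>K. if k = m then Z m else 0)"
    using Z0 by (intro sum.cong refl) auto
  also have "\<dots> = (if m \<in> K then Z m else 0)" by (simp add: K_def)
  also have "\<dots> \<le> \<bar>Z m\<bar>" by auto
  also have "\<bar>Z m\<bar> \<le> (\<Sum>\<sigma>\<in>{\<sigma>. \<sigma> permutes {..<m}}. \<Sum>u\<in>PU m. W m u * (if inj_on u {..<m} then 0 else 1))"
  proof -
    have "\<bar>Z m\<bar> \<le> (\<Sum>\<sigma>\<in>{\<sigma>. \<sigma> permutes {..<m}}. \<bar>q ^ inversions_of m \<sigma> *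
      (\<Sum>u\<in>PU m. W m u * Ph D m u * Ph D m (u \<circ> inv \<sigma>))\<bar>)"
      unfolding Z_def by (rule sum_abs)
    also have "\<dots> \<le> (\<Sum>\<sigma>\<in>{\<sigma>. \<sigma> permutes {..<m}}. \<Sum>u\<in>PU m. W m u * (if inj_on u {..<m} then 0 else 1))"
    proof (intro sum_mono)
      fix \<sigma> assume \<sigma>: "\<sigma> \<in> {\<sigma>. \<sigma> permutes {..<m}}"
      have qa1: "\<bar>q ^ inversions_of m \<sigma>\<bar> \<le> 1" using q by (simp add: power_abs power_le_one)
      have sb: "\<bar>\<Sum>u\<in>PU m. W m u * Ph D m u * Ph D m (u \<circ> inv \<sigma>)\<bar> \<le> (\<Sum>u\<in>PU m. W m u * (if inj_on u {..<m} then 0 else 1))"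
      proof -
        have "\<bar>\<Sum>u\<in>PU m. W m u * Ph D m u * Ph D m (u \<circ> inv \<sigma>)\<bar> \<le> (\<Sum>u\<in>PU m. \<bar>W m u * Ph D m u * Ph D m (u \<circ> inv \<sigma>)\<bar>)"
          by (rule sum_abs)
        also have "\<dots> \<le> (\<Sum>u\<in>PU m. W m u * (if inj_on u {..<m} then 0 else 1))"
        proof (intro sum_mono)
          fix u assume u: "u \<in> PU m"
          have i1: "inr m u" using inr_PU[OF u] .
          have i2: "inr m (u \<circ> inv \<sigma>)" using inr_inv[of \<sigma> m u] \<sigma> i1 by auto
          have a2: "\<bar>Ph D m (u \<circ> inv \<sigma>)\<bar> \<le> 1" using PhD[OF i2] by simp
          have a1: "\<bar>Ph D m u\<bar> = (if inj_on u {..<m} then 0 else 1)" using PhD[OF i1] by simp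
          have w0: "0 \<le> W m u" by (rule W_nonneg[OF u])
          have "\<bar>W m u * Ph D m u * Ph D m (u \<circ> inv \<sigma>)\<bar> = (W m u * \<bar>Ph D m u\<bar>) * \<bar>Ph D m (u \<circ> inv \<sigma>)\<bar>"
            using w0 by (simp add: abs_mult)
          also have "\<dots> \<le> (W m u * \<bar>Ph D m u\<bar>) * 1"
            using a2 w0 by (intro mult_left_mono) simp_all
          finally show "\<bar>W m u * Ph D m u * Ph D m (u \<circ> inv \<sigma>)\<bar> \<le> W m u * (if inj_on u {..<m} then 0 else 1)"
            unfolding a1 by simp
        qed
        finally show ?thesis .
      qed
      show "\<bar>q ^ inversions_of m \<sigma> * (\<Sum>u\<in>PU m. W m u * Ph D m u * Ph D m (u \<circ> inv \<sigma>))\<bar>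
          \<le> (\<Sum>u\<in>PU m. W m u * (if inj_on u {..<m} then 0 else 1))"
      proof -
        have B0: "0 \<le> (\<Sum>u\<in>PU m. W m u * (if inj_on u {..<m} then 0 else 1))"
          using W_nonneg by (intro sum_nonneg) simp
        have "\<bar>q ^ inversions_of m \<sigma>\<bar> * \<bar>\<Sum>u\<in>PU m. W m u * Ph D m u * Ph D m (u \<circ> inv \<sigma>)\<bar>
            \<le> 1 * (\<Sum>u\<in>PU m. W m u * (if inj_on u {..<m} then 0 else 1))"
          using qa1 sb B0 by (intro mult_mono) simp_all
        then show ?thesis unfolding abs_mult by simp
      qed
    qed
    finally show ?thesis .
  qed
  also have "\<dots> = fact m * (\<Sum>u\<in>PU m. W m u * (if inj_on u {..<m} then 0 else 1))"
    using card_permutations[of "{..<m}" m] by simp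
  also have "\<dots> \<le> fact m * (real m * real m * (mesh as * tN * tN ^ (m - 2)))"
    by (intro mult_left_mono NI_bound) simp
  finally show ?thesis using vf by simp
qed

end

theorem proposition5p5:
  fixes q t :: real and m :: nat
  assumes "-1 < q" and "q < 1" and "0 < t"
  shows "\<forall>\<epsilon>>0. \<exists>\<delta>>0. \<forall>as. is_subdiv t as \<and> mesh as < \<delta> \<longrightarrow>
           vnorm q (vsub (psi_vec q m as) (opoly (Cq q t m) (Xop q t) Omega)) < \<epsilon>"
proof (intro allI impI)
  fix \<epsilon> :: real assume e: "\<epsilon> > 0"
  define C where "C = fact m * (real m * real m * t * t ^ (m - 2))"
  have C0: "0 \<le> C" unfolding C_def using assms by simp
  define \<delta> where "\<delta> = \<epsilon>\<^sup>2 / (C + 1)"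
  have d0: "\<delta> > 0" unfolding \<delta>_def using e C0 by simp
  show "\<exists>\<delta>>0. \<forall>as. is_subdiv t as \<and> mesh as < \<delta> \<longrightarrow>
           vnorm q (vsub (psi_vec q m as) (opoly (Cq q t m) (Xop q t) Omega)) < \<epsilon>"
  proof (intro exI[of _ \<delta>] conjI allI impI d0)
    fix as assume h: "is_subdiv t as \<and> mesh as < \<delta>"
    then have sd: "2 \<le> length as" "sorted_wrt (<) as" "hd as = 0" "last as = t"
      by (auto simp: is_subdiv_def)
    have ne: "as \<noteq> []" using sd(1) by auto
    have h0: "as ! 0 = 0" using sd(3) hd_conv_nth[OF ne] by simp
    interpret part as
      using sd(1,2) h0 by unfold_locales auto
    have tt: "as ! (length as - 1) = t" using sd(4) last_conv_nth[OF ne] by simp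
    have qa: "\<bar>q\<bar> \<le> 1" using assms by auto
    have "vinner q (vsub (psi_vec q m as) (opoly (Cq q t m) (Xop q t) Omega))
                   (vsub (psi_vec q m as) (opoly (Cq q t m) (Xop q t) Omega))
        \<le> fact m * (real m * real m * (mesh as * t * t ^ (m - 2)))"
      using D_bound[OF qa, of m] unfolding tt .
    also have "\<dots> = C * mesh as" unfolding C_def by (simp add: mult_ac)
    also have "\<dots> \<le> C * \<delta>" using h C0 by (intro mult_left_mono) auto
    also have "\<dots> < \<epsilon>\<^sup>2"
    proof -
      have "C * \<delta> = \<epsilon>\<^sup>2 * (C / (C + 1))" unfolding \<delta>_def using C0 by (simp add: field_simps)
      also have "\<dots> < \<epsilon>\<^sup>2 * 1" using C0 e by (intro mult_strict_left_mono) auto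
      finally show ?thesis by simp
    qed
    finally have "vinner q (vsub (psi_vec q m as) (opoly (Cq q t m) (Xop q t) Omega))
                   (vsub (psi_vec q m as) (opoly (Cq q t m) (Xop q t) Omega)) < \<epsilon>\<^sup>2" .
    then have "vnorm q (vsub (psi_vec q m as) (opoly (Cq q t m) (Xop q t) Omega)) < sqrt (\<epsilon>\<^sup>2)"
      unfolding vnorm_def by (rule real_sqrt_less_mono)
    then show "vnorm q (vsub (psi_vec q m as) (opoly (Cq q t m) (Xop q t) Omega)) < \<epsilon>"
      using e by simp
  qed
qed

end
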